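(* Let $N\ge3$ and $p>1$. For $\gamma>0$ let $R(\gamma)$ be the first positive zero of the solution $u(\cdot,\gamma)$ of (IVP$_\gamma$). Then $R(\gamma)\to\infty$ as $\gamma\downarrow0$.
   Context: $A(r)=\frac{2}{1+r^2}$, $p_{\rm S}=\frac{N+2}{N-2}$, $q=\frac{N-2}{2}(p-p_{\rm S})$. (IVP$_\gamma$): $u''+\frac{N-1}{r}u'+\frac{N(N-2)}{4}A(r)^2u+A(r)^{-q}|u|^{p-1}u=0$ on $(0,\infty)$, $u(0)=\gamma$, $u'(0)=0$. *)

theory Defs
  imports "HOL-Analysis.Analysis"
begin

definition A :: "real \<Rightarrow> real" where
  "A r = 2 / (1 + r\<^sup>2)"

definition pS :: "nat \<Rightarrow> real" where
  "pS N = (real N + 2) / (real N - 2)"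

definition qexp :: "nat \<Rightarrow> real \<Rightarrow> real" where
  "qexp N p = (real N - 2) / 2 * (p - pS N)"

definition solves_IVP :: "nat \<Rightarrow> real \<Rightarrow> real \<Rightarrow> (real \<Rightarrow> real) \<Rightarrow> bool" where
  "solves_IVP N p \<gamma> u \<longleftrightarrow>
     continuous_on {0..} u \<and> u 0 = \<gamma> \<and> (u has_real_derivative 0) (at 0 within {0..}) \<and>
     (\<exists>u' u''. \<forall>r>0. (u has_real_derivative u' r) (at r) \<and>
        (u' has_real_derivative u'' r) (at r) \<and>
        u'' r + (real N - 1) / r * u' r + real N * (real N - 2) / 4 * (A r)\<^sup>2 * u r
          + A r powr (- qexp N p) * (\<bar>u r\<bar> powr (p - 1) * u r) = 0)"

text \<open>First positive zero, as an extended real (infinity if there is no positive zero).\<close>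
definition first_zero :: "(real \<Rightarrow> real) \<Rightarrow> ereal" where
  "first_zero u = Inf (ereal ` {r. r > 0 \<and> u r = 0})"

end

theory Submission imports Defs begin

definition phi :: "nat \<Rightarrow> real \<Rightarrow> real" where
  "phi N r = (1 + r\<^sup>2) powr (1 - real N / 2)"
definition psi :: "nat \<Rightarrow> real \<Rightarrow> real" where
  "psi N r = (1 + r\<^sup>2) powr (- real N / 2)"

lemma tpos: "1 + (r::real)\<^sup>2 > 0" by (simp add: add_pos_nonneg)

lemma tne[simp]: "1 + (r::real)\<^sup>2 \<noteq> 0" using tpos[of r] by linarith

lemma phi_psi: "phi N r = (1 + r\<^sup>2) * psi N r"
proof -
  have "(1 + r\<^sup>2) powr (1 - real N / 2) = (1 + r\<^sup>2) powr 1 * (1 + r\<^sup>2) powr (- real N / 2)"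
    by (subst powr_add[symmetric]) simp
  thus ?thesis unfolding phi_def psi_def using tpos[of r] by simp
qed

lemma psi_pos: "psi N r > 0" unfolding psi_def using tpos[of r] by simp
lemma phi_pos: "phi N r > 0" unfolding phi_psi using psi_pos[of N r] tpos[of r]
  by simp

lemma tpow_deriv: "((\<lambda>s. (1 + s\<^sup>2) powr a) has_real_derivative
     a * (2 * r) * (1 + r\<^sup>2) powr a / (1 + r\<^sup>2)) (at r)"
proof -
  show ?thesis
    by (rule DERIV_powr[where f="\<lambda>_. a", THEN DERIV_cong]) (auto intro!: derivative_eq_intros simp: tpos field_simps)
qed

lemma phi_deriv: "(phi N has_real_derivative (-(real N - 2) * r * psi N r)) (at r)"
proof -
  have "(phi N has_real_derivative (1 - real N / 2) * (2 * r) * phi N r / (1 + r\<^sup>2)) (at r)"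
    unfolding phi_def[abs_def] by (rule tpow_deriv)
  moreover have "(1 - real N / 2) * (2 * r) * phi N r / (1 + r\<^sup>2) = -(real N - 2) * r * psi N r"
    unfolding phi_psi using tpos[of r] by (simp add: field_simps)
  ultimately show ?thesis by simp
qed

lemma psi_deriv: "(psi N has_real_derivative (- real N * r * psi N r / (1 + r\<^sup>2))) (at r)"
proof -
  have "(psi N has_real_derivative (- real N / 2) * (2 * r) * psi N r / (1 + r\<^sup>2)) (at r)"
    unfolding psi_def[abs_def] by (rule tpow_deriv)
  thus ?thesis by (simp add: field_simps)
qed

lemma phi0: "phi N 0 = 1" by (simp add: phi_def)

lemma phi_le1: assumes "N \<ge> 2" shows "phi N r \<le> 1"
proof -
  have "(1 + r\<^sup>2) powr (1 - real N / 2) \<le> (1 + r\<^sup>2) powr 0"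
    using assms by (intro powr_mono) auto
  thus ?thesis using tpos[of r] by (simp add: phi_def)
qed

lemma phi_anti: assumes "N \<ge> 2" "0 \<le> r" "r \<le> s" shows "phi N s \<le> phi N r"
proof -
  have "(1 + s\<^sup>2) powr (1 - real N / 2) \<le> (1 + r\<^sup>2) powr (1 - real N / 2)"
    apply (rule powr_mono2') using assms by (auto intro!: power_mono add_mono simp: add_pos_nonneg)
  thus ?thesis by (simp add: phi_def)
qed

lemma A2: "(A r)\<^sup>2 = 4 / (1 + r\<^sup>2)\<^sup>2" by (simp add: A_def power_divide)

lemma aux:
  fixes n r t s u v u2 B P :: real
  assumes t: "t = 1 + r^2" and r: "r > 0"
    and u2: "u2 = - ((n - 1) / r * v + n * (n - 2) / 4 * (4 / t^2) * u + B)"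
  shows "(n - 1) * P * (v * (t * s) + (n - 2) * r * s * u)
      + (P * r) * (u2 * (t * s) + v * (-(n - 2) * r * s)
        + (n - 2) * ((s + r * (- n * r * s / t)) * u + r * s * v))
   = -((P * r) * (t * s) * B)"
proof -
  have tp: "t > 0" using t by (simp add: add_pos_nonneg)
  show ?thesis unfolding u2 using r tp
    apply (simp add: field_simps power2_eq_square)
    unfolding t by algebra
qed

lemma f_deriv:
  fixes u u' :: "real \<Rightarrow> real"
  assumes r: "r > 0" and N: "N \<ge> 3"
    and du: "(u has_real_derivative u' r) (at r)"
    and ddu: "(u' has_real_derivative u2) (at r)"
    and ode: "u2 + (real N - 1) / r * u' r + real N * (real N - 2) / 4 * (A r)\<^sup>2 * u r + B = 0"
  shows "((\<lambda>s. s^(N-1) * (u' s * phi N s + (real N - 2) * s * psi N s * u s))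
     has_real_derivative -(r^(N-1) * phi N r * B)) (at r)"
proof -
  obtain k where k: "N = k + 3" using N by (metis add.commute le_Suc_ex)
  have u2: "u2 = - ((real N - 1) / r * u' r + real N * (real N - 2) / 4 * (A r)\<^sup>2 * u r + B)"
    using ode by linarith
  have D: "((\<lambda>s. s^(N-1) * (u' s * phi N s + (real N - 2) * s * psi N s * u s))
     has_real_derivative 
      real (N-1) * r^(N-1-1) * (u' r * phi N r + (real N - 2) * r * psi N r * u r)
      + r^(N-1) * (u2 * phi N r + u' r * (-(real N - 2) * r * psi N r)
        + (real N - 2) * ((psi N r + r * (- real N * r * psi N r / (1 + r\<^sup>2))) * u r
           + r * psi N r * u' r))) (at r)"
    apply (rule derivative_eq_intros du ddu phi_deriv psi_deriv refl | simp)+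
    apply (rule disjI2)
    using tpos[of r] by (simp add: field_simps)
  have e0: "N - 1 = Suc (N - 2)" using N by arith
  have e1: "r^(N-1) = r^(N-2) * r" unfolding e0 by simp
  have e2: "real (N-1) = real N - 1" using N by (simp add: of_nat_diff)
  have e3: "N - 1 - 1 = N - 2" by simp
  show ?thesis
    apply (rule DERIV_cong[OF D])
    unfolding e1 e2 e3 phi_psi A2
    by (rule aux[OF refl r u2[unfolded A2]])
qed

definition Bf :: "nat \<Rightarrow> real \<Rightarrow> real \<Rightarrow> real" where
  "Bf N p r = A r powr (- qexp N p)"

lemma A_pos: "A r > 0" unfolding A_def using tpos[of r] by simp
lemma Bf_pos: "Bf N p r > 0" unfolding Bf_def using A_pos[of r] by simp
lemma Bf_cont: "continuous_on S (Bf N p)"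
  unfolding Bf_def[abs_def] A_def using tpos
  by (intro continuous_intros) (auto simp: add_pos_nonneg)

lemma psi_le_phi: "psi N r \<le> phi N r"
  unfolding phi_psi using psi_pos[of N r] by (simp add: mult_le_cancel_right1)

lemma phi_cont: "continuous_on S (phi N)"
  unfolding phi_def[abs_def] using tpos
  by (intro continuous_intros) (auto simp: add_pos_nonneg)

lemma bdd_on: fixes g :: "real \<Rightarrow> real" assumes "continuous_on {a..b} g" obtains M where "\<forall>x\<in>{a..b}. \<bar>g x\<bar> \<le> M"
proof -
  have "compact (g ` {a..b})" by (rule compact_continuous_image[OF assms compact_Icc])
  then obtain M where "\<forall>y\<in>g ` {a..b}. norm y \<le> M" using compact_imp_bounded bounded_iff by metis
  thus ?thesis using that by auto
qed

lemma nl_bound: fixes x M p :: real assumes "p \<ge> 1" "\<bar>x\<bar> \<le> M" shows "\<bar>\<bar>x\<bar> powr (p - 1) * x\<bar> \<le> M powr (p - 1) * M"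
proof -
  have "\<bar>x\<bar> powr (p - 1) \<le> M powr (p - 1)" using powr_mono2[of "p-1" "\<bar>x\<bar>" M] assms by auto
  hence "\<bar>x\<bar> powr (p - 1) * \<bar>x\<bar> \<le> M powr (p - 1) * M" using assms by (intro mult_mono) auto
  thus ?thesis by (simp add: abs_mult)
qed

lemma pow_le_self: "0 \<le> (x::real) \<Longrightarrow> x \<le> 1 \<Longrightarrow> 1 \<le> n \<Longrightarrow> x^n \<le> x"
  using power_decreasing[of 1 n x] by simp

context
  fixes N :: nat and p \<gamma> :: real and u u' u'' :: "real \<Rightarrow> real"
  assumes N: "N \<ge> 3" and p: "p > 1" and gam: "\<gamma> > 0"
    and cont: "continuous_on {0..} u" and u0: "u 0 = \<gamma>"
    and d0: "(u has_real_derivative 0) (at 0 within {0..})"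
    and du: "\<And>r. r > 0 \<Longrightarrow> (u has_real_derivative u' r) (at r)"
    and ddu: "\<And>r. r > 0 \<Longrightarrow> (u' has_real_derivative u'' r) (at r)"
    and ode: "\<And>r. r > 0 \<Longrightarrow> u'' r + (real N - 1) / r * u' r + real N * (real N - 2) / 4 * (A r)\<^sup>2 * u r
          + A r powr (- qexp N p) * (\<bar>u r\<bar> powr (p - 1) * u r) = 0"
begin

definition "ff s = s^(N-1) * (u' s * phi N s + (real N - 2) * s * psi N s * u s)"
definition "FF r = -(r^(N-1) * phi N r * (Bf N p r * (\<bar>u r\<bar> powr (p - 1) * u r)))"
definition "vv s = u s / phi N s"

lemma fD: "r > 0 \<Longrightarrow> (ff has_real_derivative FF r) (at r)"
  unfolding ff_def[abs_def] FF_def Bf_def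
  by (rule f_deriv[OF _ N du ddu ode])

lemma vD: assumes r: "r > 0" shows "(vv has_real_derivative ff r / (r^(N-1) * (phi N r)\<^sup>2)) (at r)"
proof -
  have D: "(vv has_real_derivative (u' r * phi N r - u r * (-(real N - 2) * r * psi N r)) / (phi N r * phi N r)) (at r)"
    unfolding vv_def[abs_def]
    by (rule DERIV_divide[OF du[OF r] phi_deriv]) (use phi_pos[of N r] in simp)
  have "r^(N-1) > 0" using r by simp
  show ?thesis
    apply (rule DERIV_cong[OF D]) unfolding ff_def
    apply (subst mult_divide_mult_cancel_left)
    using phi_pos[of N r] \<open>r^(N-1) > 0\<close> r
    by (auto simp: power2_eq_square algebra_simps)
qed

lemma u_cont_at: "x \<ge> 0 \<Longrightarrow> (u \<longlongrightarrow> u x) (at x within {0..})"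
  using cont by (simp add: continuous_on_def)

lemma v_right0: "(vv \<longlongrightarrow> \<gamma>) (at_right 0)"
proof -
  have "(u \<longlongrightarrow> \<gamma>) (at_right 0)"
    using u_cont_at[of 0] u0 by (auto intro: tendsto_within_subset)
  moreover have "(phi N \<longlongrightarrow> 1) (at_right 0)"
    using phi_cont[of UNIV N] phi0[of N]
    by (metis continuous_on_def UNIV_I tendsto_within_subset subset_UNIV)
  ultimately have "((\<lambda>s. u s / phi N s) \<longlongrightarrow> \<gamma> / 1) (at_right 0)"
    by (intro tendsto_divide) auto
  thus ?thesis unfolding vv_def[abs_def] by simp
qed

lemma f_tend: "(ff \<longlongrightarrow> 0) (at_right 0)"
proof -
  have c1: "continuous_on {0..1} u" using cont by (rule continuous_on_subset) auto
  obtain Mu where Mu: "\<forall>x\<in>{0..1}. \<bar>u x\<bar> \<le> Mu" using bdd_on[OF c1] by blast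
  obtain KB where KB: "\<forall>x\<in>{0..1::real}. \<bar>Bf N p x\<bar> \<le> KB" using bdd_on[OF Bf_cont] by blast
  have Mu0: "Mu \<ge> 0" using Mu[rule_format, of 0] by auto
  define CF where "CF = KB * (Mu powr (p-1) * Mu)"
  have FFb: "\<bar>FF x\<bar> \<le> CF" if x: "0 < x" "x \<le> 1" for x
  proof -
    have a1: "\<bar>x^(N-1)\<bar> \<le> 1" using x by (simp add: power_le_one)
    have a2: "\<bar>phi N x\<bar> \<le> 1" using phi_le1[of N x] phi_pos[of N x] N by simp
    have a3: "\<bar>Bf N p x\<bar> \<le> KB" using KB x by auto
    have a4: "\<bar>\<bar>u x\<bar> powr (p - 1) * u x\<bar> \<le> Mu powr (p-1) * Mu"
      using Mu x p by (intro nl_bound) auto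
    have "\<bar>FF x\<bar> = \<bar>x^(N-1)\<bar> * \<bar>phi N x\<bar> * (\<bar>Bf N p x\<bar> * \<bar>\<bar>u x\<bar> powr (p - 1) * u x\<bar>)"
      unfolding FF_def by (simp add: abs_mult)
    also have "\<dots> \<le> 1 * 1 * (KB * (Mu powr (p-1) * Mu))"
      using a1 a2 a3 a4 by (intro mult_mono) auto
    finally show ?thesis unfolding CF_def by simp
  qed
  have "((\<lambda>y. (u y - u 0) / (y - 0)) \<longlongrightarrow> 0) (at 0 within {0..})"
    using d0 by (simp add: has_field_derivative_iff)
  hence "eventually (\<lambda>y. dist ((u y - u 0) / (y - 0)) 0 < 1) (at 0 within {0..})"
    by (rule tendstoD) simp
  then obtain d1 where d1: "d1 > 0" "\<forall>x\<in>{0..}. x \<noteq> 0 \<and> dist x 0 < d1 \<longrightarrow> dist ((u x - u 0) / (x - 0)) 0 < 1"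
    unfolding eventually_at by blast
  have q: "\<bar>u x - \<gamma>\<bar> < x" if "0 < x" "x < d1" for x
  proof -
    have "\<bar>(u x - \<gamma>) / x\<bar> < 1" using d1(2)[rule_format, of x] that u0 by (auto simp: dist_real_def)
    thus ?thesis using that by (simp add: abs_div)
  qed
  define C where "C = 3 + (real N - 2) * Mu + CF"
  have main: "\<bar>ff s\<bar> \<le> C * s" if s: "0 < s" "s < min 1 d1" for s
  proof -
    obtain xi where xi: "s/2 < xi" "xi < s" "u s - u (s/2) = (s - s/2) * u' xi"
      using MVT2[of "s/2" s u u'] du s by (smt (verit, best) field_sum_of_halves)
    have "\<bar>u s - \<gamma>\<bar> < s" "\<bar>u (s/2) - \<gamma>\<bar> < s/2" using q[of s] q[of "s/2"] s by auto
    hence "\<bar>u s - u (s/2)\<bar> < s + s/2" by linarith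
    hence u'b: "\<bar>u' xi\<bar> \<le> 3" using xi s by (auto simp: abs_mult)
    obtain eta where eta: "xi < eta" "eta < s" "ff s - ff xi = (s - xi) * FF eta"
      using MVT2[of xi s ff FF] fD xi s by (smt (verit, best) field_sum_of_halves)
    have "\<bar>FF eta\<bar> \<le> CF" using FFb[of eta] eta xi s by auto
    hence b1: "\<bar>ff s - ff xi\<bar> \<le> s * CF" using eta xi s
      by (auto simp: abs_mult intro!: mult_mono)
    have xi1: "0 < xi" "xi \<le> 1" using xi s by auto
    have "1 \<le> N - 1" using N by simp
    hence p1: "xi^(N-1) \<le> s" using pow_le_self[of xi "N-1"] xi1 xi by auto
    have b2: "\<bar>u' xi * phi N xi\<bar> \<le> 3"
      using u'b phi_le1[of N xi] phi_pos[of N xi] N by (auto simp: abs_mult intro: mult_le_one[THEN order_trans] mult_mono[THEN order_trans])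
    have b3: "\<bar>(real N - 2) * xi * psi N xi * u xi\<bar> \<le> (real N - 2) * Mu"
    proof -
      have "\<bar>psi N xi\<bar> \<le> 1" using psi_le_phi[of N xi] phi_le1[of N xi] psi_pos[of N xi] N by auto
      moreover have "\<bar>u xi\<bar> \<le> Mu" using Mu xi1 by auto
      ultimately have "\<bar>xi * psi N xi * u xi\<bar> \<le> 1 * 1 * Mu" using xi1 Mu0
        unfolding abs_mult by (intro mult_mono) auto
      thus ?thesis using N by (simp add: abs_mult mult.assoc mult_left_mono)
    qed
    have b4: "\<bar>ff xi\<bar> \<le> s * (3 + (real N - 2) * Mu)"
    proof -
      have "\<bar>ff xi\<bar> = xi^(N-1) * \<bar>u' xi * phi N xi + (real N - 2) * xi * psi N xi * u xi\<bar>"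
        unfolding ff_def using xi1 by (simp add: abs_mult)
      also have "\<dots> \<le> s * (3 + (real N - 2) * Mu)"
        using p1 b2 b3 xi1 xi by (intro mult_mono) auto
      finally show ?thesis .
    qed
    show ?thesis using b1 b4 unfolding C_def by (auto simp: algebra_simps)
  qed
  have ev: "eventually (\<lambda>s. norm (ff s) \<le> C * s) (at_right 0)"
    unfolding eventually_at_right_field using d1 by (intro exI[of _ "min 1 d1"]) (auto intro!: main)
  have "((\<lambda>s. C * s) \<longlongrightarrow> C * 0) (at_right 0)"
    by (intro tendsto_intros)
  thus ?thesis using Lim_null_comparison[OF ev] by simp
qed

lemma not_triv: "\<not> trivial_limit (at_right (0::real))" by simp

lemma pos_core:
  assumes R: "R > 0" and K1: "\<forall>r\<in>{0..R}. Bf N p r \<le> K1"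
    and small: "\<gamma> powr (p-1) * (K1 * R * R / (phi N R)\<^sup>2) < 1"
    and z: "0 < z" "z \<le> R" and upos: "\<And>r. 0 \<le> r \<Longrightarrow> r < z \<Longrightarrow> u r > 0"
  shows "vv z > 0"
proof -
  have K1pos: "K1 > 0" using K1 Bf_pos[of N p 0] R by force
  have FFneg: "FF e \<le> 0" if "0 < e" "e < z" for e
  proof -
    have "u e > 0" using upos that by auto
    hence "\<bar>u e\<bar> powr (p - 1) * u e \<ge> 0" by simp
    thus ?thesis unfolding FF_def using phi_pos[of N e] Bf_pos[of N p e] that by simp
  qed
  have fneg: "ff r \<le> 0" if r: "0 < r" "r < z" for r
  proof (rule tendsto_lowerbound[OF f_tend _ not_triv])
    show "\<forall>\<^sub>F s in at_right 0. ff r \<le> ff s"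
      unfolding eventually_at_right_field
    proof (intro exI[of _ r] conjI allI impI)
      fix s :: real assume s: "0 < s" "s < r"
      obtain e where e: "s < e" "e < r" "ff r - ff s = (r - s) * FF e"
        using MVT2[of s r ff FF] fD s by (smt (verit))
      have "(r - s) * FF e \<le> 0" using FFneg[of e] e s r by (simp add: mult_nonneg_nonpos)
      thus "ff r \<le> ff s" using e by simp
    qed (use r in auto)
  qed
  have vle: "vv r \<le> \<gamma>" if r: "0 < r" "r < z" for r
  proof (rule tendsto_lowerbound[OF v_right0 _ not_triv])
    show "\<forall>\<^sub>F s in at_right 0. vv r \<le> vv s"
      unfolding eventually_at_right_field
    proof (intro exI[of _ r] conjI allI impI)
      fix s :: real assume s: "0 < s" "s < r"
      obtain e where e: "s < e" "e < r" "vv r - vv s = (r - s) * (ff e / (e^(N-1) * (phi N e)\<^sup>2))"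
        using MVT2[of s r vv "\<lambda>e. ff e / (e^(N-1) * (phi N e)\<^sup>2)"] vD s by (smt (verit))
      have "ff e / (e^(N-1) * (phi N e)\<^sup>2) \<le> 0" using fneg[of e] e s r phi_pos[of N e]
        by (intro divide_nonpos_pos mult_pos_pos) auto
      hence "(r - s) * (ff e / (e^(N-1) * (phi N e)\<^sup>2)) \<le> 0" using e s
        by (intro mult_nonneg_nonpos) auto
      thus "vv r \<le> vv s" using e(3) by linarith
    qed (use r in auto)
  qed
  have ule: "u r \<le> \<gamma>" if r: "0 < r" "r < z" for r
  proof -
    have ph: "0 < phi N r" "phi N r \<le> 1" using phi_pos phi_le1 N by auto
    have "u r = phi N r * vv r" unfolding vv_def using ph by simp
    moreover have "vv r \<ge> 0" unfolding vv_def using upos[of r] r ph by simp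
    ultimately have "u r \<le> vv r" using ph mult_right_mono[of "phi N r" 1 "vv r"] by simp
    thus ?thesis using vle[OF r] by simp
  qed
  define G where "G = K1 * \<gamma> powr p"
  have G0: "G \<ge> 0" unfolding G_def using K1pos by simp
  have FFlow: "FF e \<ge> -(e^(N-1) * G)" if e: "0 < e" "e < z" for e
  proof -
    have a1: "\<bar>\<bar>u e\<bar> powr (p - 1) * u e\<bar> \<le> \<gamma> powr (p-1) * \<gamma>"
      using ule[OF e] upos[of e] e p by (intro nl_bound) auto
    have "\<gamma> powr (p-1) * \<gamma> = \<gamma> powr p" using gam by (simp add: powr_diff)
    hence a2: "\<bar>u e\<bar> powr (p - 1) * u e \<le> \<gamma> powr p" using a1 by simp
    have a3: "\<bar>u e\<bar> powr (p - 1) * u e \<ge> 0" using upos[of e] e by simp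
    have a4: "Bf N p e \<le> K1" using K1 e z by auto
    have "phi N e * (Bf N p e * (\<bar>u e\<bar> powr (p - 1) * u e)) \<le> 1 * (K1 * \<gamma> powr p)"
      using phi_le1[of N e] N phi_pos[of N e] Bf_pos[of N p e] a2 a3 a4 K1pos
      by (intro mult_mono) auto
    hence "e^(N-1) * (phi N e * (Bf N p e * (\<bar>u e\<bar> powr (p - 1) * u e))) \<le> e^(N-1) * G"
      unfolding G_def using e by (intro mult_left_mono) auto
    thus ?thesis unfolding FF_def by (simp add: mult.assoc)
  qed
  have flow: "ff r \<ge> -(r^N * G)" if r: "0 < r" "r < z" for r
  proof -
    have lim: "((\<lambda>s. ff s - r^N * G) \<longlongrightarrow> 0 - r^N * G) (at_right 0)"
      by (intro tendsto_intros f_tend)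
    show ?thesis
    proof (rule tendsto_upperbound[OF lim _ not_triv, simplified])
      show "\<forall>\<^sub>F s in at_right 0. ff s - r^N * G \<le> ff r"
        unfolding eventually_at_right_field
      proof (intro exI[of _ r] conjI allI impI)
        fix s :: real assume s: "0 < s" "s < r"
        obtain e where e: "s < e" "e < r" "ff r - ff s = (r - s) * FF e"
          using MVT2[of s r ff FF] fD s by (smt (verit))
        have "e^(N-1) \<le> r^(N-1)" using e s by (intro power_mono) auto
        hence "e^(N-1) * G \<le> r^(N-1) * G" using G0 by (rule mult_right_mono)
        hence "FF e \<ge> -(r^(N-1) * G)" using FFlow[of e] e s r by auto
        hence "(r - s) * FF e \<ge> (r - s) * (-(r^(N-1) * G))" using s by (intro mult_left_mono) auto
        moreover have "(r - s) * (r^(N-1) * G) \<le> r * (r^(N-1) * G)" using s G0 r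
          by (intro mult_right_mono) auto
        moreover have "r * r^(N-1) = r^N" using N by (metis power_eq_if not_numeral_le_zero le_zero_eq)
        ultimately show "ff s - r^N * G \<le> ff r" using e by (simp add: algebra_simps)
      qed (use r in auto)
    qed
  qed
  define D where "D = R * G / (phi N R)\<^sup>2"
  have D0: "D \<ge> 0" unfolding D_def using G0 R by simp
  have vDlow: "ff e / (e^(N-1) * (phi N e)\<^sup>2) \<ge> -D" if e: "0 < e" "e < z" for e
  proof -
    have pe: "e^(N-1) > 0" using e by simp
    have "r^N = e^(N-1) * e" if "r = e" for r using N that
      by (metis mult.commute power_eq_if not_numeral_le_zero le_zero_eq)
    hence "ff e \<ge> -(e^(N-1) * (e * G))" using flow[OF e] by (simp add: mult.assoc)
    hence q1: "ff e / (e^(N-1) * (phi N e)\<^sup>2) \<ge> -(e^(N-1) * (e * G)) / (e^(N-1) * (phi N e)\<^sup>2)"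
      using pe phi_pos[of N e] by (intro divide_right_mono) auto
    have q2: "-(e^(N-1) * (e * G)) / (e^(N-1) * (phi N e)\<^sup>2) = -(e * G / (phi N e)\<^sup>2)"
      using pe by simp
    have ph: "phi N R \<le> phi N e" using phi_anti[of N e R] N e z by auto
    have "e * G / (phi N e)\<^sup>2 \<le> R * G / (phi N R)\<^sup>2"
    proof (rule frac_le)
      show "0 \<le> R * G" using R G0 by simp
      show "e * G \<le> R * G" using e z G0 by (intro mult_right_mono) auto
      show "0 < (phi N R)\<^sup>2" using phi_pos[of N R] by simp
      show "(phi N R)\<^sup>2 \<le> (phi N e)\<^sup>2" using ph phi_pos[of N R] by (intro power_mono) auto
    qed
    thus ?thesis using q1 q2 unfolding D_def by linarith
  qed
  have vz: "\<gamma> - R * D \<le> vv z"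
  proof -
    have lim: "((\<lambda>s. vv s - R * D) \<longlongrightarrow> \<gamma> - R * D) (at_right 0)"
      by (intro tendsto_intros v_right0)
    show ?thesis
    proof (rule tendsto_upperbound[OF lim _ not_triv])
      show "\<forall>\<^sub>F s in at_right 0. vv s - R * D \<le> vv z"
        unfolding eventually_at_right_field
      proof (intro exI[of _ z] conjI allI impI)
        fix s :: real assume s: "0 < s" "s < z"
        obtain e where e: "s < e" "e < z" "vv z - vv s = (z - s) * (ff e / (e^(N-1) * (phi N e)\<^sup>2))"
          using MVT2[of s z vv "\<lambda>e. ff e / (e^(N-1) * (phi N e)\<^sup>2)"] vD s by (smt (verit))
        have "(z - s) * (ff e / (e^(N-1) * (phi N e)\<^sup>2)) \<ge> (z - s) * (-D)"
          using vDlow[of e] e s by (intro mult_left_mono) auto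
        moreover have "(z - s) * D \<le> R * D" using s z D0 by (intro mult_right_mono) auto
        ultimately show "vv s - R * D \<le> vv z" using e by (simp add: algebra_simps)
      qed (use z in auto)
    qed
  qed
  have "R * D = \<gamma> * (\<gamma> powr (p-1) * (K1 * R * R / (phi N R)\<^sup>2))"
    unfolding D_def G_def using gam by (simp add: powr_diff field_simps)
  moreover have "\<gamma> * (\<gamma> powr (p-1) * (K1 * R * R / (phi N R)\<^sup>2)) < \<gamma>"
    using mult_strict_left_mono[OF small gam] by simp
  ultimately show ?thesis using vz by linarith
qed

lemma upos_all:
  assumes R: "R > 0" and K1: "\<forall>r\<in>{0..R}. Bf N p r \<le> K1"
    and small: "\<gamma> powr (p-1) * (K1 * R * R / (phi N R)\<^sup>2) < 1"
  shows "\<forall>r\<in>{0..R}. u r > 0"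
proof (rule ccontr)
  assume neg: "\<not> (\<forall>r\<in>{0..R}. u r > 0)"
  define S where "S = {0..R} \<inter> u -` {..0}"
  have Sne: "S \<noteq> {}" using neg unfolding S_def by force
  have cR: "continuous_on {0..R} u" using cont by (rule continuous_on_subset) auto
  have Scl: "closed S" unfolding S_def by (rule continuous_closed_preimage[OF cR]) auto
  have Sbdd: "bdd_below S" unfolding S_def by (rule bdd_belowI[of _ 0]) auto
  define z where "z = Inf S"
  have zS: "z \<in> S" unfolding z_def by (rule closed_contains_Inf[OF Sne Sbdd Scl])
  have z0: "z \<ge> 0" "z \<le> R" "u z \<le> 0" using zS unfolding S_def by auto
  have zpos: "z > 0" using z0 u0 gam by (cases "z = 0") auto
  have up: "u r > 0" if "0 \<le> r" "r < z" for r
  proof (rule ccontr)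
    assume "\<not> u r > 0"
    hence "r \<in> S" using that z0 unfolding S_def by auto
    hence "z \<le> r" unfolding z_def by (rule cInf_lower[OF _ Sbdd])
    thus False using that by simp
  qed
  have "vv z > 0" by (rule pos_core[OF R K1 small zpos z0(2) up])
  hence "u z > 0" unfolding vv_def using phi_pos[of N z] by (simp add: divide_pos_pos zero_less_divide_iff)
  thus False using z0 by simp
qed

end

theorem lemma6p1:
  fixes N :: nat and p :: real and U :: "real \<Rightarrow> real \<Rightarrow> real"
  assumes "N \<ge> 3" and "p > 1"
    and "\<And>\<gamma>. \<gamma> > 0 \<Longrightarrow> solves_IVP N p \<gamma> (U \<gamma>)"
  shows "((\<lambda>\<gamma>. first_zero (U \<gamma>)) \<longlongrightarrow> \<infinity>) (at_right 0)"
  unfolding tendsto_PInfty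
proof
  fix r :: real
  define R where "R = max r 0 + 1"
  have R: "R > 0" "r < R" unfolding R_def by auto
  obtain K0 where K0: "\<forall>x\<in>{0..R}. \<bar>Bf N p x\<bar> \<le> K0" using bdd_on[OF Bf_cont] by blast
  have K1: "\<forall>x\<in>{0..R}. Bf N p x \<le> K0" using K0 by fastforce
  define K where "K = K0 * R * R / (phi N R)\<^sup>2"
  have "((\<lambda>g::real. g powr (p - 1)) \<longlongrightarrow> 0) (at_right 0)"
    by (rule tendsto_zero_powrI[where b="p-1"]) (auto intro: tendsto_ident_at eventually_at_right_less[THEN eventually_mono] simp: assms)
  hence "((\<lambda>g::real. g powr (p - 1) * K) \<longlongrightarrow> 0 * K) (at_right 0)"
    by (intro tendsto_intros)
  hence ev1: "eventually (\<lambda>g. g powr (p - 1) * K < 1) (at_right 0)"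
    by (intro order_tendstoD(2)) auto
  show "\<forall>\<^sub>F g in at_right 0. ereal r < first_zero (U g)"
    using ev1 eventually_at_right_less
  proof eventually_elim
    case (elim g)
    then obtain u' u'' where sol: "continuous_on {0..} (U g)" "U g 0 = g"
       "(U g has_real_derivative 0) (at 0 within {0..})"
       "\<forall>r>0. (U g has_real_derivative u' r) (at r) \<and>
        (u' has_real_derivative u'' r) (at r) \<and>
        u'' r + (real N - 1) / r * u' r + real N * (real N - 2) / 4 * (A r)\<^sup>2 * U g r
          + A r powr (- qexp N p) * (\<bar>U g r\<bar> powr (p - 1) * U g r) = 0"
      using assms(3)[of g] unfolding solves_IVP_def by blast
    have pos: "\<forall>x\<in>{0..R}. U g x > 0"
      by (rule upos_all[OF assms(1,2) elim(2) sol(1,2,3) _ _ _ R(1) K1])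
         (use sol(4) elim(1) in \<open>auto simp: K_def\<close>)
    have "ereal R \<le> first_zero (U g)"
      unfolding first_zero_def
    proof (rule Inf_greatest)
      fix x assume "x \<in> ereal ` {r. r > 0 \<and> U g r = 0}"
      then obtain y where y: "x = ereal y" "y > 0" "U g y = 0" by auto
      have "\<not> y \<le> R"
      proof
        assume "y \<le> R" then have "U g y > 0" using pos[rule_format, of y] y by auto
        thus False using y by simp
      qed
      thus "ereal R \<le> x" using y by simp
    qed
    moreover have "ereal r < ereal R" using R by simp
    ultimately show ?case by (meson order_less_le_trans)
  qed
qed

end
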